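(* Let $\mathcal{D}\subset\mathbb{R}^n$ be a parameter set, let $X$ and $Y$ be finite-dimensional real Hilbert spaces with norms $\|\cdot\|_X$, $\|\cdot\|_Y$, and for each $\mu\in\mathcal{D}$ let $m(\cdot,\cdot;\mu):X\times X\to\mathbb{R}$, $a(\cdot,\cdot;\mu):X\times X\to\mathbb{R}$, $b(\cdot,\cdot;\mu):X\times Y\to\mathbb{R}$ be bilinear forms such that $m(\cdot,\cdot;\mu)$ is symmetric with $m(v,v;\mu)>0$ for all $0\neq v\in X$, and \[ \gamma_m(\mu)=\sup_{u\in X}\sup_{v\in X}\frac{m(u,v;\mu)}{\|u\|_X\|v\|_X}<\infty,\quad \gamma_a(\mu)=\sup_{u\in X}\sup_{v\in X}\frac{a(u,v;\mu)}{\|u\|_X\|v\|_X}<\infty, \] \[ \alpha_a(\mu)=\inf_{v\in X}\frac{a(v,v;\mu)}{\|v\|_X^2}>0,\qquad \beta(\mu)=\inf_{q\in Y}\sup_{v\in X}\frac{b(v,q;\mu)}{\|q\|_Y\|v\|_X}>0 . \] Let $K\in\mathbb{N}$, $\Delta t>0$, $\mathbb{K}=\{1,\dots,K\}$, and for each $k\in\mathbb{K}$ and $\mu\in\mathcal{D}$ let $f^k(\cdot;\mu)\in X'$, $g^k(\cdot;\mu)\in Y'$. Let the truth solution $u^k(\mu)\in X$, $p^k(\mu)\in Y$, $k\in\mathbb{K}$, be defined by $u^0(\mu)=0$ and, for $k\in\mathbb{K}$, \[ \tfrac{1}{\Delta t}m(u^k(\mu)-u^{k-1}(\mu),v;\mu)+a(u^k(\mu),v;\mu)+b(v,p^k(\mu);\mu)=f^k(v;\mu)\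 \ \forall v\in X,\qquad b(u^k(\mu),q;\mu)=g^k(q;\mu)\ \ \forall q\in Y. \] Let $X_N\subset X$, $Y_N\subset Y$, $N\in\{1,\dots,N_{\max}\}$, be subspaces such that for every $\mu\in\mathcal{D}$ there exist $u^k_N(\mu)\in X_N$, $p^k_N(\mu)\in Y_N$, $k\in\mathbb{K}$, with $u^0_N(\mu)=0$ and, for $k\in\mathbb{K}$, \[ \tfrac{1}{\Delta t}m(u^k_N(\mu)-u^{k-1}_N(\mu),v_N;\mu)+a(u^k_N(\mu),v_N;\mu)+b(v_N,p^k_N(\mu);\mu)=f^k(v_N;\mu)\ \ \forall v_N\in X_N, \] \[ b(u^k_N(\mu),q_N;\mu)=g^k(q_N;\mu)\ \ \forall q_N\in Y_N. \] Define the residuals $r^{1,k}_N(v;\mu)=f^k(v;\mu)-\tfrac{1}{\Delta t}m(u^k_N(\mu)-u^{k-1}_N(\mu),v;\mu)-a(u^k_N(\mu),v;\mu)-b(v,p^k_N(\mu);\mu)$ for $v\in X$ and $r^{2,k}_N(q;\mu)=g^k(q;\mu)-b(u^k_N(\mu),q;\mu)$ for $q\in Y$, and the errors $e^{u,k}_N(\mu)=u^k(\mu)-u^k_N(\mu)$. Let $\mu\in\mathcal{D}$, $N\in\{1,\dots,N_{\max}\}$, $k\in\mathbb{K}$, and let $\alpha_a^{\rm LB}(\mu),\gamma_a^{\rm UB}(\mu),\beta^{\rm LB}(\mu),\gamma_m^{\rm UB}(\mu)$ be positive numbers with $\alpha_a^{\rm LB}(\mu)\le\alpha_a(\mu)$,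 $\gamma_a(\mu)\le\gamma_a^{\rm UB}(\mu)$, $\beta^{\rm LB}(\mu)\le\beta(\mu)$, $\gamma_m(\mu)\le\gamma_m^{\rm UB}(\mu)$. Define \[ \Delta^k_N(\mu)=\Bigg[\Delta t\sum_{j=1}^k\frac{\|r^{1,j}_N(\cdot;\mu)\|^2_{X'}}{\alpha_a^{\rm LB}(\mu)}+\frac{2}{\beta^{\rm LB}(\mu)}\Big(1+\frac{\gamma_a^{\rm UB}(\mu)}{\alpha_a^{\rm LB}(\mu)}\Big)\|r^{1,j}_N(\cdot;\mu)\|_{X'}\|r^{2,j}_N(\cdot;\mu)\|_{Y'} \] \[ +\Big(\frac{\gamma_m^{\rm UB}(\mu)}{\Delta t}+\frac{(\gamma_a^{\rm UB}(\mu))^2}{\alpha_a^{\rm LB}(\mu)}\Big)\frac{\|r^{2,j}_N(\cdot;\mu)\|^2_{Y'}}{(\beta^{\rm LB}(\mu))^2}\Bigg]^{1/2}. \] Then \[ \Big(\|e^{u,k}_N(\mu)\|_\mu^2+\Delta t\sum_{j=1}^k\|e^{u,j}_N(\mu)\|^2_{X,\mu}\Big)^{1/2}\le\Delta^k_N(\mu). \]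
   Context: Here $\|v\|_\mu=\sqrt{m(v,v;\mu)}$ and $\|v\|_{X,\mu}=\sqrt{a(v,v;\mu)}$ for $v\in X$; $X'$, $Y'$ are the dual spaces with dual norms $\|r\|_{X'}=\sup_{0\ne v\in X}r(v)/\|v\|_X$ and $\|r\|_{Y'}=\sup_{0\ne q\in Y}r(q)/\|q\|_Y$. In the sum defining $\Delta^k_N(\mu)$, all three terms are inside the sum over $j$ and multiplied by $\Delta t$. The form $a(\cdot,\cdot;\mu)$ need not be symmetric. *)

theory Defs
  imports "HOL-Analysis.Analysis"
begin

definition cont_const :: "('a::real_normed_vector \<Rightarrow> 'b::real_normed_vector \<Rightarrow> real) \<Rightarrow> real" where
  "cont_const B = (SUP u\<in>-{0}. SUP v\<in>-{0}. B u v / (norm u * norm v))"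

definition coer_const :: "('a::real_normed_vector \<Rightarrow> 'a \<Rightarrow> real) \<Rightarrow> real" where
  "coer_const B = (INF v\<in>-{0}. B v v / (norm v)^2)"

definition infsup_const :: "('a::real_normed_vector \<Rightarrow> 'b::real_normed_vector \<Rightarrow> real) \<Rightarrow> real" where
  "infsup_const B = (INF q\<in>-{0}. SUP v\<in>-{0}. B v q / (norm q * norm v))"

definition dual_norm :: "('a::real_normed_vector \<Rightarrow> real) \<Rightarrow> real" where
  "dual_norm r = (SUP v\<in>-{0}. r v / norm v)"

definition form_norm :: "('a \<Rightarrow> 'a \<Rightarrow> 'p \<Rightarrow> real) \<Rightarrow> 'p \<Rightarrow> 'a \<Rightarrow> real" where
  "form_norm B mu v = sqrt (B v v mu)"

definition res1 :: "('x::real_vector \<Rightarrow> 'x \<Rightarrow> 'p \<Rightarrow> real) \<Rightarrow> ('x \<Rightarrow> 'x \<Rightarrow> 'p \<Rightarrow> real)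
    \<Rightarrow> ('x \<Rightarrow> 'y \<Rightarrow> 'p \<Rightarrow> real) \<Rightarrow> (nat \<Rightarrow> 'x \<Rightarrow> 'p \<Rightarrow> real) \<Rightarrow> real
    \<Rightarrow> (nat \<Rightarrow> 'x) \<Rightarrow> (nat \<Rightarrow> 'y) \<Rightarrow> 'p \<Rightarrow> nat \<Rightarrow> 'x \<Rightarrow> real" where
  "res1 m a b f dt uN pN mu j = (\<lambda>v. f j v mu - (1/dt) * m (uN j - uN (j-1)) v mu
       - a (uN j) v mu - b v (pN j) mu)"

definition res2 :: "('x \<Rightarrow> 'y \<Rightarrow> 'p \<Rightarrow> real) \<Rightarrow> (nat \<Rightarrow> 'y \<Rightarrow> 'p \<Rightarrow> real)
    \<Rightarrow> (nat \<Rightarrow> 'x) \<Rightarrow> 'p \<Rightarrow> nat \<Rightarrow> 'y \<Rightarrow> real" where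
  "res2 b g uN mu j = (\<lambda>q. g j q mu - b (uN j) q mu)"

end

theory Submission
  imports Defs
begin


lemma exists_nonzero_eucl: "\<exists>v::'a::euclidean_space. v \<noteq> 0"
  using nonempty_Basis nonzero_Basis by blast

lemma cont_le:
  fixes B :: "'a::euclidean_space \<Rightarrow> 'b::euclidean_space \<Rightarrow> real"
  assumes bil: "bilinear B"
    and bdd: "bdd_above {B u v / (norm u * norm v) | u v. u \<noteq> 0 \<and> v \<noteq> 0}"
  shows "B u v \<le> cont_const B * norm u * norm v"
proof (cases "u = 0 \<or> v = 0")
  case True then show ?thesis using bilinear_lzero[OF bil] bilinear_rzero[OF bil] by auto
next
  case False
  obtain M where M: "\<And>x. x \<in> {B u v / (norm u * norm v) | u v. u \<noteq> 0 \<and> v \<noteq> 0} \<Longrightarrow> x \<le> M"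
    using bdd unfolding bdd_above_def by blast
  have Mb: "B u' v' / (norm u' * norm v') \<le> M" if "u' \<noteq> 0" "v' \<noteq> 0" for u' v'
    using M that by blast
  have ne: "-{0::'b} \<noteq> {}" using exists_nonzero_eucl by auto
  have inb: "bdd_above ((\<lambda>v'. B u' v' / (norm u' * norm v')) ` (-{0}))" if "u' \<noteq> 0" for u'
    using Mb that by (auto intro!: bdd_aboveI)
  have "B u v / (norm u * norm v) \<le> (SUP v'\<in>-{0}. B u v' / (norm u * norm v'))"
    using False inb by (intro cSUP_upper) auto
  also have "\<dots> \<le> cont_const B"
    unfolding cont_const_def
  proof (rule cSUP_upper[where f="\<lambda>u'. SUP v'\<in>-{0}. B u' v' / (norm u' * norm v')"])
    show "u \<in> -{0}" using False by auto
    show "bdd_above ((\<lambda>u'. SUP v'\<in>-{0}. B u' v' / (norm u' * norm v')) ` (-{0}))"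
      using Mb ne by (auto intro!: bdd_aboveI cSUP_least)
  qed
  finally have "B u v / (norm u * norm v) \<le> cont_const B" .
  moreover have "norm u * norm v > 0" using False by auto
  ultimately show ?thesis by (simp add: divide_le_eq mult.assoc)
qed

lemma coer_le:
  fixes B :: "'a::euclidean_space \<Rightarrow> 'a \<Rightarrow> real"
  assumes bil: "bilinear B"
  shows "coer_const B * (norm v)^2 \<le> B v v"
proof (cases "v = 0")
  case True then show ?thesis using bilinear_lzero[OF bil] by auto
next
  case False
  obtain K where K: "\<And>x y. norm (B x y) \<le> K * norm x * norm y"
    using bilinear_bounded[OF bil] by blast
  have "bdd_below ((\<lambda>v. B v v / (norm v)^2) ` (-{0}))"
  proof (rule bdd_belowI2[where m="-K"])
    fix x :: 'a assume "x \<in> -{0}"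
    then have p: "(norm x)^2 > 0" by auto
    have "- (K * (norm x)^2) \<le> B x x" using K[of x x] by (simp add: power2_eq_square abs_le_iff)
    then show "-K \<le> B x x / (norm x)^2" using p by (simp add: le_divide_eq)
  qed
  then have "coer_const B \<le> B v v / (norm v)^2"
    unfolding coer_const_def using False by (intro cINF_lower) auto
  moreover have "(norm v)^2 > 0" using False by auto
  ultimately show ?thesis by (simp add: le_divide_eq)
qed

lemma dual_le:
  fixes r :: "'a::euclidean_space \<Rightarrow> real"
  assumes lin: "linear r"
  shows "r v \<le> dual_norm r * norm v" and "dual_norm r \<ge> 0"
proof -
  obtain C where C: "\<And>x. norm (r x) \<le> C * norm x" using linear_bounded[OF lin] by blast
  have bdd: "bdd_above ((\<lambda>v. r v / norm v) ` (-{0}))"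
  proof (rule bdd_aboveI2[where M=C])
    fix x :: 'a assume "x \<in> -{0}"
    then have p: "norm x > 0" by auto
    have "r x \<le> C * norm x" using C[of x] by simp
    then show "r x / norm x \<le> C" using p by (simp add: divide_le_eq)
  qed
  have up: "r x / norm x \<le> dual_norm r" if "x \<noteq> 0" for x
    unfolding dual_norm_def using bdd that by (intro cSUP_upper) auto
  show "r v \<le> dual_norm r * norm v"
  proof (cases "v = 0")
    case True then show ?thesis using linear_0[OF lin] by simp
  next
    case False
    then show ?thesis using up[OF False] by (simp add: divide_le_eq)
  qed
  obtain x :: 'a where x: "x \<noteq> 0" using exists_nonzero_eucl by blast
  have "r (-x) = - r x" using linear_neg[OF lin] by simp
  then have "- (r x / norm x) \<le> dual_norm r" using up[of "-x"] x by simp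
  moreover have "r x / norm x \<le> dual_norm r" using up[OF x] .
  ultimately show "dual_norm r \<ge> 0" by linarith
qed

lemma riesz_repr:
  fixes r :: "'a::euclidean_space \<Rightarrow> real"
  assumes lin: "linear r"
  shows "(\<Sum>i\<in>Basis. r i *\<^sub>R i) \<bullet> v = r v"
proof -
  have "r v = r (\<Sum>i\<in>Basis. (v \<bullet> i) *\<^sub>R i)" by (simp add: euclidean_representation)
  also have "\<dots> = (\<Sum>i\<in>Basis. (v \<bullet> i) * r i)" using lin by (simp add: linear_sum linear_scale)
  finally show ?thesis by (simp add: inner_sum_left inner_sum_right mult.commute inner_commute[of _ v])
qed

lemma infsup_lift:
  fixes b :: "'a::euclidean_space \<Rightarrow> 'b::euclidean_space \<Rightarrow> real"
  assumes bil: "bilinear b" and beta: "beta > 0" "beta \<le> infsup_const b"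
    and lin: "linear r"
  shows "\<exists>w. (\<forall>q. b w q = r q) \<and> beta * norm w \<le> dual_norm r"
proof -
  have linl: "linear (\<lambda>v. b v q)" for q using bil by (simp add: bilinear_def)
  have linr: "linear (\<lambda>q. b v q)" for v using bil by (simp add: bilinear_def)
  define Bs where "Bs q = (\<Sum>i\<in>Basis. b i q *\<^sub>R i)" for q
  have Bs_inner: "Bs q \<bullet> v = b v q" for q v
    unfolding Bs_def using riesz_repr[OF linl] .
  have Bs_lin: "linear Bs"
    unfolding Bs_def linear_iff
    by (simp add: bilinear_radd[OF bil] bilinear_rmul[OF bil] scaleR_add_left sum.distrib
        scaleR_sum_right)
  define T where "T q = (\<Sum>i\<in>Basis. b (Bs q) i *\<^sub>R i)" for q
  have T_inner: "T q \<bullet> q' = b (Bs q) q'" for q q'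
    unfolding T_def using riesz_repr[OF linr] .
  have T_lin: "linear T"
    unfolding T_def linear_iff
    by (simp add: linear_add[OF Bs_lin] linear_scale[OF Bs_lin] bilinear_ladd[OF bil]
        bilinear_lmul[OF bil] scaleR_add_left sum.distrib scaleR_sum_right)
  have ne: "-{0::'a} \<noteq> {}" using exists_nonzero_eucl by auto
  have key: "beta * norm q \<le> norm (Bs q)" for q
  proof (cases "q = 0")
    case True then show ?thesis by simp
  next
    case False
    then have nq: "norm q > 0" by simp
    define S where "S q' = (SUP v\<in>-{0}. b v q' / (norm q' * norm v))" for q'
    have Sb: "b v q' / (norm q' * norm v) \<le> norm (Bs q') / norm q'" if "v \<noteq> 0" "q' \<noteq> 0" for v q'
    proof -
      have "b v q' \<le> norm (Bs q') * norm v" using Bs_inner[of q' v] norm_cauchy_schwarz[of "Bs q'" v] by simp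
      then show ?thesis using that by (simp add: divide_le_eq field_simps)
    qed
    have bddS: "bdd_above ((\<lambda>v. b v q' / (norm q' * norm v)) ` (-{0}))" if "q' \<noteq> 0" for q'
      using Sb that by (auto intro!: bdd_aboveI)
    have S_le: "S q' \<le> norm (Bs q') / norm q'" if "q' \<noteq> 0" for q'
      unfolding S_def using ne Sb that by (intro cSUP_least) auto
    have S_ge: "S q' \<ge> 0" if "q' \<noteq> 0" for q'
    proof -
      obtain x :: 'a where x: "x \<noteq> 0" using exists_nonzero_eucl by blast
      have u1: "b x q' / (norm q' * norm x) \<le> S q'"
        unfolding S_def using bddS[OF that] x by (intro cSUP_upper) auto
      have u2: "b (-x) q' / (norm q' * norm (-x)) \<le> S q'"
        unfolding S_def using bddS[OF that] x by (intro cSUP_upper) auto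
      have "b (-x) q' = - b x q'" using bilinear_lneg[OF bil] by simp
      then show ?thesis using u1 u2 by (simp add: divide_minus_left) 
    qed
    have "infsup_const b \<le> S q"
      unfolding infsup_const_def S_def[symmetric]
      using False S_ge by (intro cINF_lower) (auto intro!: bdd_belowI2[where m=0])
    then have "beta \<le> norm (Bs q) / norm q" using beta S_le[OF False] by linarith
    then show ?thesis using nq by (simp add: le_divide_eq)
  qed
  have T_inj: "inj T"
  proof (rule linear_injective_0[OF T_lin, THEN iffD2], intro allI impI)
    fix q assume "T q = 0"
    then have "b (Bs q) q = 0" using T_inner[of q q] by simp
    then have "Bs q \<bullet> Bs q = 0" using Bs_inner[of q "Bs q"] by simp
    then have "Bs q = 0" by simp
    then show "q = 0" using key[of q] beta by (simp add: zero_less_mult_iff mult_le_0_iff)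
  qed
  have "surj T" using linear_injective_imp_surjective[OF T_lin T_inj] by simp
  then obtain q0 where q0: "T q0 = (\<Sum>i\<in>Basis. r i *\<^sub>R i)" by (metis surjE)
  define w where "w = Bs q0"
  have wq: "b w q = r q" for q
    using T_inner[of q0 q] riesz_repr[OF lin, of q] q0 w_def by simp
  have "norm w ^ 2 = b w q0" using Bs_inner[of q0 w] w_def by (simp add: power2_norm_eq_inner)
  also have "\<dots> \<le> dual_norm r * norm q0" using wq dual_le(1)[OF lin] by simp
  finally have w2: "norm w ^ 2 \<le> dual_norm r * norm q0" .
  have kq: "beta * norm q0 \<le> norm w" using key w_def by simp
  have R0: "dual_norm r \<ge> 0" using dual_le(2)[OF lin] .
  have "beta * norm w \<le> dual_norm r"
  proof (cases "w = 0")
    case True then show ?thesis using R0 by simp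
  next
    case False
    then have nw: "norm w > 0" by simp
    have "beta * (norm w)^2 \<le> dual_norm r * (beta * norm q0)"
      using w2 beta by (simp add: mult_left_mono algebra_simps)
    also have "\<dots> \<le> dual_norm r * norm w" using kq R0 by (simp add: mult_left_mono)
    finally have "(beta * norm w) * norm w \<le> dual_norm r * norm w" by (simp add: power2_eq_square algebra_simps)
    then show ?thesis using nw by simp
  qed
  then show ?thesis using wq by blast
qed

lemma final_ineq:
  fixes dt al be ga gm R1 R2 E W A ME MP Mw :: real
  assumes dt: "dt > 0" and al: "al > 0" and be: "be > 0" and ga: "ga > 0" and gm: "gm > 0"
    and R1: "R1 \<ge> 0" and R2: "R2 \<ge> 0" and E: "E \<ge> 0" and W: "W \<ge> 0"
    and bW: "be * W \<le> R2" and AE: "al * E^2 \<le> A" and Mw: "Mw \<le> gm * W^2"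
    and main: "(1/dt) * ((ME - MP)/2 - Mw/2) + A \<le> R1 * E + R1 * W + ga * E * W"
  shows "ME - MP + dt * A \<le> dt * (R1^2 / al + 2 / be * (1 + ga / al) * R1 * R2
           + (gm / dt + ga^2 / al) * R2^2 / be^2)"
proof -
  define x where "x = R1 + ga * W"
  have s1: "ME - MP - Mw + 2*dt*A \<le> 2*dt*(x*E + R1*W)"
  proof -
    have "(2*dt) * ((1/dt) * ((ME - MP)/2 - Mw/2) + A) \<le> (2*dt) * (R1 * E + R1 * W + ga * E * W)"
      using main dt by (intro mult_left_mono) auto
    moreover have "(2*dt) * ((1/dt) * ((ME - MP)/2 - Mw/2) + A) = ME - MP - Mw + 2*dt*A"
      using dt by (simp add: field_simps)
    ultimately show ?thesis unfolding x_def by (simp add: algebra_simps)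
  qed
  have s2: "2*x*E \<le> A + x^2/al"
  proof -
    have "0 \<le> (al*E - x)^2 / al" using al by simp
    also have "\<dots> = al*E^2 - 2*x*E + x^2/al" using al by (simp add: power2_eq_square field_simps)
    finally show ?thesis using AE by linarith
  qed
  have s3: "ME - MP + dt*A \<le> gm*W^2 + dt*(x^2/al) + 2*dt*R1*W"
  proof -
    have "2*dt*(x*E) \<le> dt*(A + x^2/al)" using s2 dt by (simp add: mult_left_mono)
    then show ?thesis using s1 Mw by (simp add: algebra_simps)
  qed
  have Wle: "W \<le> R2/be" using bW be by (simp add: le_divide_eq mult.commute)
  have x0: "x \<ge> 0" unfolding x_def using R1 ga W by simp
  have xle: "x \<le> R1 + ga*R2/be" unfolding x_def using mult_left_mono[OF Wle, of ga] ga by simp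
  have x2: "x^2 \<le> (R1 + ga*R2/be)^2" using x0 xle by (simp add: power_mono)
  have W2: "W^2 \<le> (R2/be)^2" using W Wle by (simp add: power_mono)
  have "gm*W^2 + dt*(x^2/al) + 2*dt*R1*W \<le> gm*(R2/be)^2 + dt*((R1 + ga*R2/be)^2/al) + 2*dt*R1*(R2/be)"
  proof -
    have "gm*W^2 \<le> gm*(R2/be)^2" using W2 gm by simp
    moreover have "dt*(x^2/al) \<le> dt*((R1 + ga*R2/be)^2/al)" using x2 dt al
      by (simp add: divide_right_mono)
    moreover have "2*dt*R1*W \<le> 2*dt*R1*(R2/be)" using mult_left_mono[OF Wle, of "2*dt*R1"] dt R1 by simp
    ultimately show ?thesis by linarith
  qed
  also have "\<dots> = dt * (R1^2 / al + 2 / be * (1 + ga / al) * R1 * R2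
           + (gm / dt + ga^2 / al) * R2^2 / be^2)"
    using dt al be by (simp add: power2_eq_square field_simps)
  finally show ?thesis using s3 by linarith
qed



lemma mhelp: "(t3::real) = t2 - 2*t6 + t7 \<Longrightarrow> t1 = t7 - 2*t8 + t4 \<Longrightarrow> t5 = t6 - t8 \<Longrightarrow> 0 \<le> t1 \<Longrightarrow> (t2 - t3)/2 - t4/2 \<le> t5"
  by (simp add: field_simps)

theorem proposition2p1:
  fixes D :: "(real^'n) set"
    and m a :: "'x::euclidean_space \<Rightarrow> 'x \<Rightarrow> real^'n \<Rightarrow> real"
    and b :: "'x \<Rightarrow> 'y::euclidean_space \<Rightarrow> real^'n \<Rightarrow> real"
    and K :: nat and dt :: real
    and f :: "nat \<Rightarrow> 'x \<Rightarrow> real^'n \<Rightarrow> real"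
    and g :: "nat \<Rightarrow> 'y \<Rightarrow> real^'n \<Rightarrow> real"
    and u :: "real^'n \<Rightarrow> nat \<Rightarrow> 'x" and p :: "real^'n \<Rightarrow> nat \<Rightarrow> 'y"
    and Nmax :: nat and XN :: "nat \<Rightarrow> 'x set" and YN :: "nat \<Rightarrow> 'y set"
    and uN :: "nat \<Rightarrow> real^'n \<Rightarrow> nat \<Rightarrow> 'x" and pN :: "nat \<Rightarrow> real^'n \<Rightarrow> nat \<Rightarrow> 'y"
    and \<mu> :: "real^'n" and N k :: nat
    and alphaLB gammaaUB betaLB gammamUB :: real
  assumes bil_m: "\<forall>\<mu>\<in>D. bilinear (\<lambda>u v. m u v \<mu>)"
    and bil_a: "\<forall>\<mu>\<in>D. bilinear (\<lambda>u v. a u v \<mu>)"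
    and bil_b: "\<forall>\<mu>\<in>D. bilinear (\<lambda>v q. b v q \<mu>)"
    and sym_m: "\<forall>\<mu>\<in>D. \<forall>u v. m u v \<mu> = m v u \<mu>"
    and pos_m: "\<forall>\<mu>\<in>D. \<forall>v. v \<noteq> 0 \<longrightarrow> m v v \<mu> > 0"
    and fin_m: "\<forall>\<mu>\<in>D. bdd_above {m u v \<mu> / (norm u * norm v) | u v. u \<noteq> 0 \<and> v \<noteq> 0}"
    and fin_a: "\<forall>\<mu>\<in>D. bdd_above {a u v \<mu> / (norm u * norm v) | u v. u \<noteq> 0 \<and> v \<noteq> 0}"
    and coer_a: "\<forall>\<mu>\<in>D. coer_const (\<lambda>u v. a u v \<mu>) > 0"
    and infsup_b: "\<forall>\<mu>\<in>D. infsup_const (\<lambda>v q. b v q \<mu>) > 0"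
    and dt_pos: "dt > 0"
    and f_lin: "\<forall>\<mu>\<in>D. \<forall>j\<in>{1..K}. linear (\<lambda>v. f j v \<mu>)"
    and g_lin: "\<forall>\<mu>\<in>D. \<forall>j\<in>{1..K}. linear (\<lambda>q. g j q \<mu>)"
    and u0: "\<forall>\<mu>\<in>D. u \<mu> 0 = 0"
    and u_eq1: "\<forall>\<mu>\<in>D. \<forall>j\<in>{1..K}. \<forall>v.
       (1/dt) * m (u \<mu> j - u \<mu> (j-1)) v \<mu> + a (u \<mu> j) v \<mu> + b v (p \<mu> j) \<mu> = f j v \<mu>"
    and u_eq2: "\<forall>\<mu>\<in>D. \<forall>j\<in>{1..K}. \<forall>q. b (u \<mu> j) q \<mu> = g j q \<mu>"
    and XN_sub: "\<forall>N'\<in>{1..Nmax}. subspace (XN N')"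
    and YN_sub: "\<forall>N'\<in>{1..Nmax}. subspace (YN N')"
    and uN_mem: "\<forall>N'\<in>{1..Nmax}. \<forall>\<mu>\<in>D. \<forall>j\<in>{1..K}. uN N' \<mu> j \<in> XN N' \<and> pN N' \<mu> j \<in> YN N'"
    and uN0: "\<forall>N'\<in>{1..Nmax}. \<forall>\<mu>\<in>D. uN N' \<mu> 0 = 0"
    and uN_eq1: "\<forall>N'\<in>{1..Nmax}. \<forall>\<mu>\<in>D. \<forall>j\<in>{1..K}. \<forall>v\<in>XN N'.
       (1/dt) * m (uN N' \<mu> j - uN N' \<mu> (j-1)) v \<mu> + a (uN N' \<mu> j) v \<mu> + b v (pN N' \<mu> j) \<mu>
         = f j v \<mu>"
    and uN_eq2: "\<forall>N'\<in>{1..Nmax}. \<forall>\<mu>\<in>D. \<forall>j\<in>{1..K}. \<forall>q\<in>YN N'. b (uN N' \<mu> j) q \<mu> = g j q \<mu>"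
    and mu_D: "\<mu> \<in> D"
    and N_range: "N \<in> {1..Nmax}"
    and k_range: "k \<in> {1..K}"
    and pos_LB: "alphaLB > 0" "gammaaUB > 0" "betaLB > 0" "gammamUB > 0"
    and alphaLB_le: "alphaLB \<le> coer_const (\<lambda>u v. a u v \<mu>)"
    and gammaaUB_ge: "cont_const (\<lambda>u v. a u v \<mu>) \<le> gammaaUB"
    and betaLB_le: "betaLB \<le> infsup_const (\<lambda>v q. b v q \<mu>)"
    and gammamUB_ge: "cont_const (\<lambda>u v. m u v \<mu>) \<le> gammamUB"
  shows "sqrt ((form_norm m \<mu> (u \<mu> k - uN N \<mu> k))^2
            + dt * (\<Sum>j=1..k. (form_norm a \<mu> (u \<mu> j - uN N \<mu> j))^2))
         \<le> sqrt (dt * (\<Sum>j=1..k.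
              (dual_norm (res1 m a b f dt (uN N \<mu>) (pN N \<mu>) \<mu> j))^2 / alphaLB
            + 2 / betaLB * (1 + gammaaUB / alphaLB)
                * dual_norm (res1 m a b f dt (uN N \<mu>) (pN N \<mu>) \<mu> j)
                * dual_norm (res2 b g (uN N \<mu>) \<mu> j)
            + (gammamUB / dt + gammaaUB^2 / alphaLB)
                * (dual_norm (res2 b g (uN N \<mu>) \<mu> j))^2 / betaLB^2))"
  proof -
  have bm: "bilinear (\<lambda>u v. m u v \<mu>)" using bil_m mu_D by blast
  have ba: "bilinear (\<lambda>u v. a u v \<mu>)" using bil_a mu_D by blast
  have bb: "bilinear (\<lambda>v q. b v q \<mu>)" using bil_b mu_D by blast
  have sm: "\<And>x y. m x y \<mu> = m y x \<mu>" using sym_m mu_D by blast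
  have pm: "\<And>x. m x x \<mu> \<ge> 0"
  proof -
    fix x show "m x x \<mu> \<ge> 0"
      using pos_m mu_D bilinear_lzero[OF bm, of 0] by (cases "x = 0") (auto intro: less_imp_le)
  qed
  define e where "e j = u \<mu> j - uN N \<mu> j" for j
  define eps where "eps j = p \<mu> j - pN N \<mu> j" for j
  define r1 where "r1 j = res1 m a b f dt (uN N \<mu>) (pN N \<mu>) \<mu> j" for j
  define r2 where "r2 j = res2 b g (uN N \<mu>) \<mu> j" for j
  define T where "T j = (dual_norm (r1 j))^2 / alphaLB
            + 2 / betaLB * (1 + gammaaUB / alphaLB) * dual_norm (r1 j) * dual_norm (r2 j)
            + (gammamUB / dt + gammaaUB^2 / alphaLB) * (dual_norm (r2 j))^2 / betaLB^2" for j
  have e0: "e 0 = 0" unfolding e_def using u0 uN0 mu_D N_range by auto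
  have aE: "\<And>x. a x x \<mu> \<ge> alphaLB * (norm x)^2"
  proof -
    fix x
    have "coer_const (\<lambda>u v. a u v \<mu>) * (norm x)^2 \<le> a x x \<mu>" using coer_le[OF ba] by simp
    moreover have "alphaLB * (norm x)^2 \<le> coer_const (\<lambda>u v. a u v \<mu>) * (norm x)^2"
      using alphaLB_le by (simp add: mult_right_mono)
    ultimately show "a x x \<mu> \<ge> alphaLB * (norm x)^2" by linarith
  qed
  have pa: "\<And>x. a x x \<mu> \<ge> 0" using aE pos_LB(1) by (meson order_trans zero_le_mult_iff zero_le_power2 less_imp_le)
  have step: "m (e j) (e j) \<mu> - m (e (j-1)) (e (j-1)) \<mu> + dt * a (e j) (e j) \<mu> \<le> dt * T j"
    if j: "j \<in> {1..K}" for j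
  proof -
    have err1: "r1 j v = (1/dt) * m (e j - e (j-1)) v \<mu> + a (e j) v \<mu> + b v (eps j) \<mu>" for v
    proof -
      have "f j v \<mu> = (1/dt) * m (u \<mu> j - u \<mu> (j-1)) v \<mu> + a (u \<mu> j) v \<mu> + b v (p \<mu> j) \<mu>"
        using u_eq1 mu_D j by auto
      then show ?thesis unfolding r1_def res1_def e_def eps_def
        by (simp add: bilinear_lsub[OF bm] bilinear_lsub[OF ba] bilinear_rsub[OF bb] bilinear_ladd[OF bm] algebra_simps diff_divide_distrib add_divide_distrib)
    qed
    have err2: "r2 j q = b (e j) q \<mu>" for q
      unfolding r2_def res2_def e_def using u_eq2 mu_D j by (simp add: bilinear_lsub[OF bb])
    have lin1: "linear (r1 j)"
      unfolding linear_iff err1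
      by (simp add: bilinear_radd[OF bm] bilinear_radd[OF ba] bilinear_ladd[OF bb]
          bilinear_rmul[OF bm] bilinear_rmul[OF ba] bilinear_lmul[OF bb] algebra_simps)
    have lin2: "linear (r2 j)"
      unfolding linear_iff err2
      by (simp add: bilinear_radd[OF bb] bilinear_rmul[OF bb])
    obtain w where w: "\<And>q. b w q \<mu> = r2 j q" and bw: "betaLB * norm w \<le> dual_norm (r2 j)"
      using infsup_lift[OF bb pos_LB(3) betaLB_le lin2] by blast
    define E where "E = e j"
    define P where "P = e (j-1)"
    define d where "d = E - P"
    have bz: "b (E - w) (eps j) \<mu> = 0"
      using w err2 by (simp add: bilinear_lsub[OF bb] E_def)
    have eq: "r1 j (E - w) = (1/dt) * m d (E - w) \<mu> + a E (E - w) \<mu>"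
      using err1[of "E - w"] bz unfolding E_def P_def d_def by simp
    have mexp1: "m P P \<mu> = m E E \<mu> - 2 * m d E \<mu> + m d d \<mu>"
    proof -
      have "P = E - d" unfolding d_def by simp
      then show ?thesis
        by (simp add: bilinear_lsub[OF bm] bilinear_rsub[OF bm] sm[of E d])
    qed
    have mexp2: "m (d - w) (d - w) \<mu> = m d d \<mu> - 2 * m d w \<mu> + m w w \<mu>"
      by (simp add: bilinear_lsub[OF bm] bilinear_rsub[OF bm] sm[of w d])
    have mexp3: "m d (E - w) \<mu> = m d E \<mu> - m d w \<mu>" by (simp add: bilinear_rsub[OF bm])
    have mpart: "m d (E - w) \<mu> \<ge> (m E E \<mu> - m P P \<mu>)/2 - m w w \<mu> / 2"
      by (rule mhelp[OF mexp1 mexp2 mexp3 pm[of "d - w"]])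
    have mpart': "(1/dt) * ((m E E \<mu> - m P P \<mu>)/2 - m w w \<mu> / 2) \<le> (1/dt) * m d (E - w) \<mu>"
      using mult_left_mono[OF mpart, of "1/dt"] dt_pos by simp
    have aEw: "a E w \<mu> \<le> gammaaUB * norm E * norm w"
    proof -
      have "a E w \<mu> \<le> cont_const (\<lambda>u v. a u v \<mu>) * norm E * norm w"
        using cont_le[OF ba, of E w] fin_a mu_D by simp
      also have "\<dots> \<le> gammaaUB * norm E * norm w"
        using gammaaUB_ge by (simp add: mult_right_mono mult.assoc)
      finally show ?thesis .
    qed
    have apart: "a E (E - w) \<mu> = a E E \<mu> - a E w \<mu>" by (simp add: bilinear_rsub[OF ba])
    have r1p: "r1 j (E - w) \<le> dual_norm (r1 j) * norm E + dual_norm (r1 j) * norm w"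
    proof -
      have "r1 j (E - w) = r1 j E + r1 j (- w)" using linear_diff[OF lin1] linear_neg[OF lin1] by simp
      then show ?thesis using dual_le(1)[OF lin1, of E] dual_le(1)[OF lin1, of "-w"] by simp
    qed
    have mw: "m w w \<mu> \<le> gammamUB * (norm w)^2"
    proof -
      have "m w w \<mu> \<le> cont_const (\<lambda>u v. m u v \<mu>) * norm w * norm w"
        using cont_le[OF bm, of w w] fin_m mu_D by simp
      also have "\<dots> \<le> gammamUB * (norm w)^2"
        using gammamUB_ge by (simp add: mult_right_mono mult.assoc power2_eq_square)
      finally show ?thesis .
    qed
    have main: "(1/dt) * ((m E E \<mu> - m P P \<mu>)/2 - m w w \<mu>/2) + a E E \<mu>
        \<le> dual_norm (r1 j) * norm E + dual_norm (r1 j) * norm w + gammaaUB * norm E * norm w"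
      using mpart' eq apart aEw r1p by linarith
    have R2: "dual_norm (r2 j) \<ge> 0" using dual_le(2)[OF lin2] .
    have "m E E \<mu> - m P P \<mu> + dt * a E E \<mu> \<le> dt * T j"
      unfolding T_def
      by (rule final_ineq[OF dt_pos pos_LB(1) pos_LB(3) pos_LB(2) pos_LB(4) dual_le(2)[OF lin1] R2
            norm_ge_zero norm_ge_zero bw aE mw main])
    then show ?thesis unfolding E_def P_def .
  qed
  have kK: "k \<le> K" "1 \<le> k" using k_range by auto
  have sum_step: "(\<Sum>j=1..k. m (e j) (e j) \<mu> - m (e (j-1)) (e (j-1)) \<mu> + dt * a (e j) (e j) \<mu>)
      \<le> (\<Sum>j=1..k. dt * T j)"
    using step kK by (intro sum_mono) auto
  have tele: "(\<Sum>j=1..k. m (e j) (e j) \<mu> - m (e (j-1)) (e (j-1)) \<mu>) = m (e k) (e k) \<mu>"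
  proof -
    have "(\<Sum>j=1..k. m (e j) (e j) \<mu> - m (e (j-1)) (e (j-1)) \<mu>)
        = (\<Sum>i=0..k-1. m (e (Suc i)) (e (Suc i)) \<mu> - m (e i) (e i) \<mu>)"
    proof -
      have "(\<Sum>j=1..k. m (e j) (e j) \<mu> - m (e (j-1)) (e (j-1)) \<mu>)
          = (\<Sum>i=0..k-1. m (e (i+1)) (e (i+1)) \<mu> - m (e (i+1-1)) (e (i+1-1)) \<mu>)"
        using kK by (subst sum.shift_bounds_cl_nat_ivl[symmetric]) simp
      then show ?thesis by simp
    qed
    also have "\<dots> = m (e (Suc (k-1))) (e (Suc (k-1))) \<mu> - m (e 0) (e 0) \<mu>"
      by (rule sum_Suc_diff) simp
    also have "\<dots> = m (e k) (e k) \<mu>" using kK e0 bilinear_lzero[OF bm] by simp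
    finally show ?thesis .
  qed
  have "m (e k) (e k) \<mu> + dt * (\<Sum>j=1..k. a (e j) (e j) \<mu>) \<le> dt * (\<Sum>j=1..k. T j)"
    using sum_step tele by (simp add: sum.distrib sum_distrib_left)
  moreover have "(form_norm m \<mu> (e k))^2 = m (e k) (e k) \<mu>"
    unfolding form_norm_def using pm by simp
  moreover have "(\<Sum>j=1..k. (form_norm a \<mu> (e j))^2) = (\<Sum>j=1..k. a (e j) (e j) \<mu>)"
    unfolding form_norm_def using pa by simp
  ultimately show ?thesis
    unfolding e_def T_def r1_def r2_def by (simp add: real_sqrt_le_iff)
qed


end
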